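(* Consider the discretized protocol with respect to $G$ with parameter $\epsilon>0$ on an information structure, and suppose turn $t+1$ is Alice's. Fix a realized rectangle $S_t\times T_t$ with $\mathbb P(\sigma\in S_t,\tau\in T_t)>0$, and let "hi" be the event that Alice says "high" at turn $t+1$. Let $\alpha:=\mathbb E[D_G(\mu_{\sigma T_t}\parallel\mu_{S_tT_t})\mathbf 1_{\mathrm{hi}}\mid S_t,T_t]$. Then $\mathbb E[D_G(\mu_{S_{t+1}T_{t+1}}\parallel\mu_{S_tT_t})\mathbf 1_{\mathrm{hi}}\mid S_t,T_t]\ge\frac{\alpha\epsilon}{8M+2\epsilon}$. The analogous statement holds with "low" in place of "high", and likewise when turn $t+1$ is Bob's (with $\mu_{S_t\tau}$ in place of $\mu_{\sigma T_t}$).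
   Context: $G:[0,1]\to\mathbb R$ strictly convex, differentiable on $(0,1)$, $M:=\sup G-\inf G<\infty$; $D_G(y\parallel x)=G(y)-G(x)-(y-x)G'(x)$. An information structure is a tuple $(\Omega,\mathbb P,\mathcal S,\mathcal T,Y)$: a probability space, random variables $\sigma:\Omega\to\mathcal S$ (Alice's signal), $\tau:\Omega\to\mathcal T$ (Bob's signal), $Y:\Omega\to[0,1]$. For measurable $S,T$: $\mu_{\sigma T}=\mathbb E[Y\mid\sigma,\tau\in T]$, $\mu_{S\tau}=\mathbb E[Y\mid\sigma\in S,\tau]$, $\mu_{ST}=\mathbb E[Y\mid\sigma\in S,\tau\in T]$; $\mathbb E[\cdot\mid S,T]$ conditions on $\{\sigma\in S,\tau\in T\}$. In a communication protocol, after $t$ messages the set of signal pairs consistent with the transcript is a rectangle $S_t\times T_t$ ($S_0=\mathcal S$, $T_0=\mathcal T$). Discretized protocol w.r.t. $G$ with parameter $\epsilon$: Alice speaks at odd times, Bob at even times. On Alice's turn $t$, she sends "medium" if $D_G(\mu_{\sigma T_{t-1}}\parallel\mu_{S_{t-1}T_{t-1}})<\epsilon/2$; otherwise "high" if $\mu_{\sigma T_{t-1}}>\mu_{S_{t-1}T_{t-1}}$ and "low" if $\mu_{\sigma T_{t-1}}<\mu_{S_{t-1}T_{t-1}}$. Bob acts analogously with $\mu_{S_{t-1}\tau}$. *)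

theory Defs
  imports "HOL-Probability.Probability"
begin

definition strictly_convex_on :: "real set \<Rightarrow> (real \<Rightarrow> real) \<Rightarrow> bool" where
  "strictly_convex_on S G \<longleftrightarrow> convex S \<and>
     (\<forall>x\<in>S. \<forall>y\<in>S. x \<noteq> y \<longrightarrow> (\<forall>u. 0 < u \<and> u < 1 \<longrightarrow>
        G ((1 - u) * x + u * y) < (1 - u) * G x + u * G y))"

definition DG :: "(real \<Rightarrow> real) \<Rightarrow> real \<Rightarrow> real \<Rightarrow> real" where
  "DG G y x = G y - G x - (y - x) * deriv G x"

definition osc :: "(real \<Rightarrow> real) \<Rightarrow> real" where
  "osc G = (SUP x\<in>{0..1}. G x) - (INF x\<in>{0..1}. G x)"

definition rect :: "'w measure \<Rightarrow> ('w \<Rightarrow> 's) \<Rightarrow> ('w \<Rightarrow> 't) \<Rightarrow> 's set \<Rightarrow> 't set \<Rightarrow> 'w set" where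
  "rect M \<sigma> \<tau> A B = {\<omega> \<in> space M. \<sigma> \<omega> \<in> A \<and> \<tau> \<omega> \<in> B}"

definition condE :: "'w measure \<Rightarrow> ('w \<Rightarrow> real) \<Rightarrow> 'w set \<Rightarrow> real" where
  "condE M X E = (\<integral>\<omega>. X \<omega> * indicator E \<omega> \<partial>M) / measure M E"

text \<open>f is a ([0,1]-valued) version of mu_{sigma T} = E[Y | sigma, tau \<in> T], as a function of
  Alice's signal: the defining property of the conditional expectation given sigma
  on the event {tau \<in> T}.\<close>
definition post_alice :: "'w measure \<Rightarrow> ('w \<Rightarrow> 's) \<Rightarrow> 's measure \<Rightarrow> ('w \<Rightarrow> 't) \<Rightarrow> 't set
     \<Rightarrow> ('w \<Rightarrow> real) \<Rightarrow> ('s \<Rightarrow> real) \<Rightarrow> bool" where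
  "post_alice M \<sigma> SS \<tau> T Y f \<longleftrightarrow> f \<in> borel_measurable SS \<and> (\<forall>s. f s \<in> {0..1}) \<and>
     (\<forall>A\<in>sets SS. (\<integral>\<omega>. Y \<omega> * indicator (rect M \<sigma> \<tau> A T) \<omega> \<partial>M)
                 = (\<integral>\<omega>. f (\<sigma> \<omega>) * indicator (rect M \<sigma> \<tau> A T) \<omega> \<partial>M))"

text \<open>g is a ([0,1]-valued) version of mu_{S tau} = E[Y | sigma \<in> S, tau].\<close>
definition post_bob :: "'w measure \<Rightarrow> ('w \<Rightarrow> 's) \<Rightarrow> 's set \<Rightarrow> ('w \<Rightarrow> 't) \<Rightarrow> 't measure
     \<Rightarrow> ('w \<Rightarrow> real) \<Rightarrow> ('t \<Rightarrow> real) \<Rightarrow> bool" where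
  "post_bob M \<sigma> S \<tau> TT Y g \<longleftrightarrow> g \<in> borel_measurable TT \<and> (\<forall>t. g t \<in> {0..1}) \<and>
     (\<forall>B\<in>sets TT. (\<integral>\<omega>. Y \<omega> * indicator (rect M \<sigma> \<tau> S B) \<omega> \<partial>M)
                 = (\<integral>\<omega>. g (\<tau> \<omega>) * indicator (rect M \<sigma> \<tau> S B) \<omega> \<partial>M))"

datatype msg = Low | Medium | High

text \<open>Message of the discretized protocol: v is the speaker's posterior, c the current
  rectangle mean.\<close>
definition dmsg :: "(real \<Rightarrow> real) \<Rightarrow> real \<Rightarrow> real \<Rightarrow> real \<Rightarrow> msg" where
  "dmsg G \<epsilon> v c = (if DG G v c < \<epsilon> / 2 then Medium else if v > c then High
                    else if v < c then Low else Medium)"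

end

theory Submission
  imports Defs
begin

lemma sc_conv:
  assumes "strictly_convex_on {0..1} G" "x\<in>{0..1}" "y\<in>{0..1}" "0 \<le> u" "u \<le> 1"
  shows "G ((1-u)*x+u*y) \<le> (1-u)*G x + u*G y"
proof -
  consider "x = y" | "u = 0" | "u = 1" | "x \<noteq> y" "0 < u" "u < 1" using assms by linarith
  then show ?thesis
  proof cases
    case 1 then show ?thesis by (simp add: algebra_simps)
  next
    case 4 then show ?thesis using assms unfolding strictly_convex_on_def
      by (meson less_imp_le)
  qed auto
qed

lemma sc_convex_on: "strictly_convex_on {0..1} G \<Longrightarrow> convex_on {0..1} G"
  by (rule convex_onI) (auto intro!: sc_conv)

lemma DG_nonneg:
  assumes "strictly_convex_on {0..1} G" "G differentiable_on {0<..<1}"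
    "c \<in> {0<..<1}" "y \<in> {0..1}"
  shows "DG G y c \<ge> 0"
proof -
  have "G differentiable (at c)"
    using assms(2,3) by (metis at_within_open differentiable_on_def open_greaterThanLessThan)
  then have d: "(G has_field_derivative deriv G c) (at c)"
    using DERIV_deriv_iff_real_differentiable by blast
  have "interior {0..1::real} = {0<..<1}" by simp
  then have "deriv G c * (y - c) \<le> G y - G c"
    using convex_on_imp_above_tangent[OF sc_convex_on[OF assms(1)] _ _ assms(4),
        of c "deriv G c"] assms(3) d
    by (simp add: has_field_derivative_at_within)
  then show ?thesis unfolding DG_def by (simp add: algebra_simps)
qed

lemma DG_mono_up:
  assumes "strictly_convex_on {0..1} G" "G differentiable_on {0<..<1}"
    "c \<in> {0<..<1}" "c \<le> y1" "y1 \<le> y2" "y2 \<le> 1"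
  shows "DG G y1 c \<le> DG G y2 c"
proof (cases "y2 = c")
  case True then show ?thesis using assms by simp
next
  case False
  define u where "u = (y1 - c) / (y2 - c)"
  have u: "0 \<le> u" "u \<le> 1" using assms False by (auto simp: u_def divide_le_eq_1 intro!: divide_nonneg_nonneg)
  have e: "y1 - c = u * (y2 - c)" using False by (simp add: u_def field_simps)
  have y1: "y1 = (1-u)*c + u*y2" using e by (simp add: algebra_simps)
  have "G y1 \<le> (1-u)*G c + u*G y2"
    using sc_conv[OF assms(1), of c y2 u] u assms y1 by auto
  moreover have "DG G y2 c \<ge> 0" using DG_nonneg[OF assms(1,2,3), of y2] assms by auto
  moreover have "DG G y1 c = G y1 - G c - u*((y2-c)*deriv G c)" unfolding DG_def using e by simp
  moreover have "u * DG G y2 c = u*G y2 - u*G c - u*((y2-c)*deriv G c)"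
    unfolding DG_def by (simp add: algebra_simps)
  ultimately have "DG G y1 c \<le> u * DG G y2 c" by (simp add: algebra_simps)
  also have "\<dots> \<le> DG G y2 c" using u \<open>DG G y2 c \<ge> 0\<close> by (simp add: mult_left_le_one_le)
  finally show ?thesis .
qed

lemma DG_mono_down:
  assumes "strictly_convex_on {0..1} G" "G differentiable_on {0<..<1}"
    "c \<in> {0<..<1}" "y1 \<le> c" "y2 \<le> y1" "0 \<le> y2"
  shows "DG G y1 c \<le> DG G y2 c"
proof (cases "y2 = c")
  case True then show ?thesis using assms by simp
next
  case False
  define u where "u = (c - y1) / (c - y2)"
  have u: "0 \<le> u" "u \<le> 1" using assms False by (auto simp: u_def divide_le_eq_1 intro!: divide_nonneg_nonneg)
  have e: "y1 - c = u * (y2 - c)" using False by (simp add: u_def field_simps)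
  have y1: "y1 = (1-u)*c + u*y2" using e by (simp add: algebra_simps)
  have "G y1 \<le> (1-u)*G c + u*G y2"
    using sc_conv[OF assms(1), of c y2 u] u assms y1 by auto
  moreover have "DG G y2 c \<ge> 0" using DG_nonneg[OF assms(1,2,3), of y2] assms by auto
  moreover have "DG G y1 c = G y1 - G c - u*((y2-c)*deriv G c)" unfolding DG_def using e by simp
  moreover have "u * DG G y2 c = u*G y2 - u*G c - u*((y2-c)*deriv G c)"
    unfolding DG_def by (simp add: algebra_simps)
  ultimately have "DG G y1 c \<le> u * DG G y2 c" by (simp add: algebra_simps)
  also have "\<dots> \<le> DG G y2 c" using u \<open>DG G y2 c \<ge> 0\<close> by (simp add: mult_left_le_one_le)
  finally show ?thesis .
qed

lemma G_meas:
  fixes G :: "real \<Rightarrow> real"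
  assumes "G differentiable_on {0<..<1}" "F \<in> borel_measurable N" "\<forall>x\<in>space N. F x \<in> {0..1}"
  shows "(\<lambda>x. G (F x)) \<in> borel_measurable N"
proof -
  define g where "g = (\<lambda>y::real. indicator {0<..<1} y *\<^sub>R G y + indicator {0} y * G 0 + indicator {1} y * G 1)"
  have c: "continuous_on {0<..<1} G"
    using assms(1) differentiable_imp_continuous_on by blast
  have "g \<in> borel_measurable borel"
    unfolding g_def
    by (intro borel_measurable_add borel_measurable_continuous_on_indicator c) auto
  then have m: "(\<lambda>x. g (F x)) \<in> borel_measurable N" using measurable_compose[OF assms(2)] by blast
  have eq: "\<And>x. x \<in> space N \<Longrightarrow> G (F x) = g (F x)"
    using assms(3) by (force simp: g_def indicator_def)
  have "(\<lambda>x. G (F x)) \<in> borel_measurable N \<longleftrightarrow> (\<lambda>x. g (F x)) \<in> borel_measurable N"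
    by (rule measurable_cong) (rule eq)
  then show ?thesis using m by blast
qed


lemma bnd_int:
  fixes h :: "'w \<Rightarrow> real"
  assumes "finite_measure M" "h \<in> borel_measurable M" "\<forall>x\<in>space M. \<bar>h x\<bar> \<le> B"
  shows "integrable M h"
  using finite_measure.integrable_const_bound[OF assms(1), of h B] assms(2,3)
  by (simp add: AE_I2)

lemma dmsg_High: "dmsg G \<epsilon> y c = High \<longleftrightarrow> \<not> DG G y c < \<epsilon>/2 \<and> y > c"
  by (auto simp: dmsg_def)
lemma dmsg_Low: "dmsg G \<epsilon> y c = Low \<longleftrightarrow> \<not> DG G y c < \<epsilon>/2 \<and> y < c"
  by (auto simp: dmsg_def)

lemma dmsg_sets:
  fixes G :: "real \<Rightarrow> real"
  assumes "G differentiable_on {0<..<1}" "F \<in> borel_measurable N" "\<forall>x\<in>space N. F x \<in> {0..1}"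
  shows "{x\<in>space N. dmsg G \<epsilon> (F x) c = m} \<in> sets N"
proof -
  have [measurable]: "(\<lambda>x. G (F x)) \<in> borel_measurable N" using G_meas[OF assms] .
  note [measurable] = assms(2)
  have [measurable]: "(\<lambda>x. DG G (F x) c) \<in> borel_measurable N" unfolding DG_def by measurable
  have "(\<lambda>x. dmsg G \<epsilon> (F x) c) \<in> N \<rightarrow>\<^sub>M count_space UNIV" unfolding dmsg_def by measurable
  then show ?thesis by measurable
qed


lemma core:
  fixes M :: "'w measure" and Y F :: "'w \<Rightarrow> real" and G :: "real \<Rightarrow> real"
  assumes P: "prob_space M"
    and Ym: "Y \<in> borel_measurable M" and Yb: "\<forall>\<omega>\<in>space M. Y \<omega> \<in> {0..1}"
    and Gsc: "strictly_convex_on {0..1} G" and Gd: "G differentiable_on {0<..<1}"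
    and bA: "bdd_above (G ` {0..1})" and bB: "bdd_below (G ` {0..1})"
    and eps: "\<epsilon> > 0"
    and R: "R \<in> sets M" and PR: "measure M R > 0"
    and Fm: "F \<in> borel_measurable M" and Fb: "\<forall>\<omega>\<in>space M. F \<omega> \<in> {0..1}"
    and hR: "(\<integral>\<omega>. Y \<omega> * indicator R \<omega> \<partial>M) = (\<integral>\<omega>. F \<omega> * indicator R \<omega> \<partial>M)"
    and Edef: "E = {\<omega>\<in>R. dmsg G \<epsilon> (F \<omega>) (condE M Y R) = m}"
    and hE: "(\<integral>\<omega>. Y \<omega> * indicator E \<omega> \<partial>M) = (\<integral>\<omega>. F \<omega> * indicator E \<omega> \<partial>M)"
    and mm: "m \<in> {High, Low}"
  shows "condE M (\<lambda>\<omega>. DG G (condE M Y E) (condE M Y R)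
             * indicator {\<omega>'\<in>space M. dmsg G \<epsilon> (F \<omega>') (condE M Y R) = m} \<omega>) R
         \<ge> condE M (\<lambda>\<omega>. DG G (F \<omega>) (condE M Y R)
             * indicator {\<omega>'\<in>space M. dmsg G \<epsilon> (F \<omega>') (condE M Y R) = m} \<omega>) R
           * \<epsilon> / (8 * osc G + 2 * \<epsilon>)"
proof -
  interpret prob_space M by (rule P)
  define c where "c = condE M Y R"
  define v where "v = condE M Y E"
  define Hs where "Hs = {\<omega>'\<in>space M. dmsg G \<epsilon> (F \<omega>') c = m}"
  define PE where "PE = measure M E"
  define PRR where "PRR = measure M R"
  define d where "d = deriv G c"
  define Sp where "Sp = (SUP x\<in>{0..1}. G x)"
  define If where "If = (INF x\<in>{0..1}. G x)"
  have osc: "osc G = Sp - If" by (simp add: osc_def Sp_def If_def)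
  have Gup: "G y \<le> Sp" if "y \<in> {0..1}" for y
    unfolding Sp_def using bA that by (rule cSUP_upper2) simp
  have Glo: "If \<le> G y" if "y \<in> {0..1}" for y
    unfolding If_def using bB that by (rule cINF_lower2) simp
  have oscnn: "osc G \<ge> 0" using Gup[of 0] Glo[of 0] osc by simp
  have Hs: "Hs \<in> sets M" unfolding Hs_def by (rule dmsg_sets[OF Gd Fm Fb])
  have Rsp: "R \<subseteq> space M" using R sets.sets_into_space by blast
  have EHs: "E = R \<inter> Hs" unfolding Edef Hs_def c_def using Rsp by auto
  have E: "E \<in> sets M" using EHs R Hs by auto
  have ERs: "E \<subseteq> R" using EHs by auto
  have [measurable]: "R \<in> sets M" "E \<in> sets M" using R E by auto
  note [measurable] = Fm Ym
  have GFm[measurable]: "(\<lambda>x. G (F x)) \<in> borel_measurable M" using G_meas[OF Gd Fm Fb] .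
  have fin: "finite_measure M" by unfold_locales
  have intF: "integrable M F" by (rule bnd_int[OF fin Fm, of 1]) (use Fb in auto)
  have intY: "integrable M Y" by (rule bnd_int[OF fin Ym, of 1]) (use Yb in auto)
  have intGF: "integrable M (\<lambda>x. G (F x))"
    by (rule bnd_int[OF fin GFm, of "\<bar>Sp\<bar> + \<bar>If\<bar>"])
       (use Fb Gup Glo in \<open>fastforce simp: abs_le_iff\<close>)
  have ind: "\<And>A. A \<in> sets M \<Longrightarrow> (\<integral>\<omega>. indicator A \<omega> \<partial>M) = measure M A"
    by (simp add: Int_absorb2 sets.sets_into_space)
  have indc: "\<And>A a. A \<in> sets M \<Longrightarrow> (\<integral>\<omega>. a * indicator A \<omega> \<partial>M) = a * measure M A"
    using ind by simp
  have PRpos: "PRR > 0" using PR PRR_def by simp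
  have cdef: "(\<integral>\<omega>. Y \<omega> * indicator R \<omega> \<partial>M) = c * PRR"
    using PRpos by (simp add: c_def condE_def PRR_def)
  have intFR: "(\<integral>\<omega>. F \<omega> * indicator R \<omega> \<partial>M) = c * PRR" using cdef hR by simp
  have c0: "0 \<le> c" unfolding c_def condE_def
    using Yb by (auto intro!: divide_nonneg_nonneg integral_nonneg simp: indicator_def)
  have c1: "c \<le> 1"
  proof -
    have "(\<integral>\<omega>. Y \<omega> * indicator R \<omega> \<partial>M) \<le> (\<integral>\<omega>. indicator R \<omega> \<partial>M)"
      using Yb by (intro integral_mono integrable_real_mult_indicator intY integrable_real_indicator)
        (auto simp: indicator_def less_top[symmetric])
    then have "c * PRR \<le> 1 * PRR" using cdef ind[OF R] PRR_def by simp
    then show ?thesis using PRpos by simp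
  qed
  have lhs_eq: "condE M (\<lambda>\<omega>. DG G v c * indicator Hs \<omega>) R = DG G v c * PE / PRR"
  proof -
    have "(\<integral>\<omega>. DG G v c * indicator Hs \<omega> * indicator R \<omega> \<partial>M) = (\<integral>\<omega>. DG G v c * indicator E \<omega> \<partial>M)"
      by (intro Bochner_Integration.integral_cong) (auto simp: EHs indicator_def)
    then show ?thesis using indc[OF E] by (simp add: condE_def PE_def PRR_def)
  qed
  define I where "I = (\<integral>\<omega>. DG G (F \<omega>) c * indicator E \<omega> \<partial>M)"
  have rhs_eq: "condE M (\<lambda>\<omega>. DG G (F \<omega>) c * indicator Hs \<omega>) R = I / PRR"
  proof -
    have "(\<integral>\<omega>. DG G (F \<omega>) c * indicator Hs \<omega> * indicator R \<omega> \<partial>M) = I"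
      unfolding I_def by (intro Bochner_Integration.integral_cong) (auto simp: EHs indicator_def)
    then show ?thesis by (simp add: condE_def PRR_def)
  qed
  have key: "I * (\<epsilon> / (8 * osc G + 2 * \<epsilon>)) \<le> DG G v c * PE"
  proof (cases "PE = 0")
    case True
    then have "E \<in> null_sets M" using E by (intro null_setsI) (simp_all add: emeasure_eq_measure PE_def)
    then have "AE \<omega> in M. \<omega> \<notin> E" by (rule AE_not_in)
    then have "I = 0" unfolding I_def by (intro integral_eq_zero_AE) (auto elim!: eventually_mono)
    then show ?thesis using True by simp
  next
    case False
    then have PEpos: "PE > 0" using PE_def by (simp add: less_le)
    have emE: "emeasure M E \<noteq> 0" using PEpos by (simp add: emeasure_eq_measure PE_def)
    have intFE: "integrable M (\<lambda>\<omega>. F \<omega> * indicator E \<omega>)" by (rule integrable_real_mult_indicator[OF E intF])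
    have intFRi: "integrable M (\<lambda>\<omega>. F \<omega> * indicator R \<omega>)" by (rule integrable_real_mult_indicator[OF R intF])
    have intI: "integrable M (indicator E :: 'w \<Rightarrow> real)"
      by (rule integrable_real_indicator[OF E]) (simp add: less_top[symmetric])
    have intcE: "integrable M (\<lambda>\<omega>. a * indicator E \<omega>)" for a :: real
      by (rule integrable_mult_right) (rule intI)
    have vdef: "(\<integral>\<omega>. F \<omega> * indicator E \<omega> \<partial>M) = v * PE"
      using PEpos hE by (simp add: v_def condE_def PE_def)
    have v0: "0 \<le> v" unfolding v_def condE_def
      using Yb by (auto intro!: divide_nonneg_nonneg integral_nonneg simp: indicator_def)
    have v1: "v \<le> 1"
    proof -
      have "(\<integral>\<omega>. F \<omega> * indicator E \<omega> \<partial>M) \<le> (\<integral>\<omega>. 1 * indicator E \<omega> \<partial>M)"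
        using Fb by (intro integral_mono intFE intcE) (auto simp: indicator_def)
      then have "v * PE \<le> 1 * PE" using vdef indc[OF E] PE_def by simp
      then show ?thesis using PEpos by simp
    qed
    obtain \<omega>0 where w0: "\<omega>0 \<in> E" using emE by (metis emeasure_empty equals0I)
    then have w0s: "\<omega>0 \<in> space M" using ERs Rsp by auto
    have FEs: "\<And>\<omega>. \<omega> \<in> E \<Longrightarrow> dmsg G \<epsilon> (F \<omega>) c = m" using Edef c_def by auto
    have Dge: "DG G v c \<ge> \<epsilon>/2"
    proof (cases "m = High")
      case True
      have FE: "\<And>\<omega>. \<omega> \<in> E \<Longrightarrow> \<not> DG G (F \<omega>) c < \<epsilon>/2 \<and> F \<omega> > c"
        using FEs True dmsg_High by metis
      have posFE: "(\<integral>\<omega>. 0 \<partial>M) < (\<integral>\<omega>. F \<omega> * indicator E \<omega> \<partial>M)"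
      proof (rule integral_less_AE[OF _ intFE emE E])
        have "\<forall>x\<in>E. F x > 0" using FE c0 by (meson le_less_trans)
        then show "AE x in M. x \<in> E \<longrightarrow> 0 \<noteq> F x * indicator E x" by (auto intro!: AE_I2)
        show "AE x in M. 0 \<le> F x * indicator E x" using Fb by (auto intro!: AE_I2 simp: indicator_def)
      qed simp
      have "(\<integral>\<omega>. F \<omega> * indicator E \<omega> \<partial>M) \<le> (\<integral>\<omega>. F \<omega> * indicator R \<omega> \<partial>M)"
        using Fb ERs by (intro integral_mono intFE intFRi) (auto simp: indicator_def)
      then have "c * PRR > 0" using posFE intFR by simp
      then have cpos: "c > 0" using PRpos by (simp add: zero_less_mult_iff)
      have clt1: "c < 1" using FE[OF w0] Fb w0s by fastforce
      show ?thesis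
      proof (rule ccontr)
        assume nD: "\<not> \<epsilon>/2 \<le> DG G v c"
        have gt: "F \<omega> > v" if "\<omega> \<in> E" for \<omega>
        proof (rule ccontr)
          assume "\<not> v < F \<omega>"
          then have "DG G (F \<omega>) c \<le> DG G v c"
            using FE[OF that] v1 cpos clt1 by (intro DG_mono_up[OF Gsc Gd]) auto
          then show False using FE[OF that] nD by linarith
        qed
        have "(\<integral>\<omega>. v * indicator E \<omega> \<partial>M) < (\<integral>\<omega>. F \<omega> * indicator E \<omega> \<partial>M)"
        proof (rule integral_less_AE[OF intcE intFE emE E])
          show "AE x in M. x \<in> E \<longrightarrow> v * indicator E x \<noteq> F x * indicator E x" using gt by (auto intro!: AE_I2)
          show "AE x in M. v * indicator E x \<le> F x * indicator E x"
            using gt by (auto intro!: AE_I2 less_imp_le simp: indicator_def)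
        qed
        then show False using vdef indc[OF E] PE_def by simp
      qed
    next
      case False
      then have mL: "m = Low" using mm by auto
      have FE: "\<And>\<omega>. \<omega> \<in> E \<Longrightarrow> \<not> DG G (F \<omega>) c < \<epsilon>/2 \<and> F \<omega> < c"
        using FEs mL dmsg_Low by metis
      have int1E: "integrable M (\<lambda>\<omega>. (1 - F \<omega>) * indicator E \<omega>)"
        by (rule integrable_real_mult_indicator[OF E]) (rule Bochner_Integration.integrable_diff[OF integrable_const intF])
      have int1R: "integrable M (\<lambda>\<omega>. (1 - F \<omega>) * indicator R \<omega>)"
        by (rule integrable_real_mult_indicator[OF R]) (rule Bochner_Integration.integrable_diff[OF integrable_const intF])
      have posFE: "(\<integral>\<omega>. 0 \<partial>M) < (\<integral>\<omega>. (1 - F \<omega>) * indicator E \<omega> \<partial>M)"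
      proof (rule integral_less_AE[OF _ int1E emE E])
        have "\<forall>x\<in>E. 1 - F x > 0" using FE c1 by (meson diff_gt_0_iff_gt less_le_trans)
        then show "AE x in M. x \<in> E \<longrightarrow> 0 \<noteq> (1 - F x) * indicator E x" by (auto intro!: AE_I2)
        show "AE x in M. 0 \<le> (1 - F x) * indicator E x" using Fb by (auto intro!: AE_I2 simp: indicator_def)
      qed simp
      have "(\<integral>\<omega>. (1 - F \<omega>) * indicator E \<omega> \<partial>M) \<le> (\<integral>\<omega>. (1 - F \<omega>) * indicator R \<omega> \<partial>M)"
        using Fb ERs by (intro integral_mono int1E int1R) (auto simp: indicator_def)
      also have "\<dots> = (\<integral>\<omega>. 1 * indicator R \<omega> - F \<omega> * indicator R \<omega> \<partial>M)"
        by (rule Bochner_Integration.integral_cong) (simp_all add: algebra_simps)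
      also have "\<dots> = (\<integral>\<omega>. 1 * indicator R \<omega> \<partial>M) - (\<integral>\<omega>. F \<omega> * indicator R \<omega> \<partial>M)"
      proof (rule Bochner_Integration.integral_diff[OF _ intFRi])
        show "integrable M (\<lambda>\<omega>. 1 * indicator R \<omega> :: real)"
          by (simp add: integrable_real_indicator[OF R] less_top[symmetric])
      qed
      also have "\<dots> = PRR - c * PRR" using intFR indc[OF R] PRR_def by simp
      finally have "PRR - c * PRR > 0" using posFE by simp
      then have clt1: "c < 1" using PRpos by (simp add: algebra_simps)
      have cpos: "c > 0" using FE[OF w0] Fb w0s by fastforce
      show ?thesis
      proof (rule ccontr)
        assume nD: "\<not> \<epsilon>/2 \<le> DG G v c"
        have gt: "F \<omega> < v" if "\<omega> \<in> E" for \<omega>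
        proof (rule ccontr)
          assume "\<not> F \<omega> < v"
          then have "DG G (F \<omega>) c \<le> DG G v c"
            using FE[OF that] v0 cpos clt1 by (intro DG_mono_down[OF Gsc Gd]) auto
          then show False using FE[OF that] nD by linarith
        qed
        have "(\<integral>\<omega>. F \<omega> * indicator E \<omega> \<partial>M) < (\<integral>\<omega>. v * indicator E \<omega> \<partial>M)"
        proof (rule integral_less_AE[OF intFE intcE emE E])
          show "AE x in M. x \<in> E \<longrightarrow> F x * indicator E x \<noteq> v * indicator E x" using gt by (auto intro!: AE_I2)
          show "AE x in M. F x * indicator E x \<le> v * indicator E x"
            using gt by (auto intro!: AE_I2 less_imp_le simp: indicator_def)
        qed
        then show False using vdef indc[OF E] PE_def by simp
      qed
    qed
    have i3: "integrable M (\<lambda>x. (F x - c) * deriv G c)"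
      by (rule integrable_mult_left) (rule Bochner_Integration.integrable_diff[OF intF integrable_const])
    have i4: "integrable M (\<lambda>x. G (F x) - G c)"
      by (rule Bochner_Integration.integrable_diff[OF intGF integrable_const])
    have intDG: "integrable M (\<lambda>\<omega>. DG G (F \<omega>) c * indicator E \<omega>)"
      unfolding DG_def
      by (rule integrable_real_mult_indicator[OF E])
         (rule Bochner_Integration.integrable_diff[OF i4 i3])
    have "I \<le> (\<integral>\<omega>. (Sp - G c + c * d) * indicator E \<omega> - d * (F \<omega> * indicator E \<omega>) \<partial>M)"
      unfolding I_def
    proof (intro integral_mono intDG Bochner_Integration.integrable_diff intcE integrable_mult_right intFE)
      fix \<omega> assume "\<omega> \<in> space M"
      then have "G (F \<omega>) \<le> Sp" using Fb Gup by auto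
      then show "DG G (F \<omega>) c * indicator E \<omega> \<le> (Sp - G c + c * d) * indicator E \<omega> - d * (F \<omega> * indicator E \<omega>)"
        unfolding DG_def d_def by (auto simp: indicator_def algebra_simps)
    qed
    also have "\<dots> = (Sp - G c + c * d) * PE - d * (v * PE)"
      using intcE intFE indc[OF E] vdef PE_def by (simp add: Bochner_Integration.integral_diff)
    also have "\<dots> \<le> (DG G v c + osc G) * PE"
    proof -
      have "Sp - G c + c * d - d * v \<le> DG G v c + osc G"
        using Glo[of v] v0 v1 osc unfolding DG_def d_def by (simp add: algebra_simps)
      then have "(Sp - G c + c * d - d * v) * PE \<le> (DG G v c + osc G) * PE"
        using PEpos by (intro mult_right_mono) auto
      then show ?thesis by (simp add: algebra_simps)
    qed
    finally have Ib: "I \<le> (DG G v c + osc G) * PE" .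
    define k where "k = \<epsilon> / (8 * osc G + 2 * \<epsilon>)"
    have den: "8 * osc G + 2 * \<epsilon> > 0" using oscnn eps by simp
    have k0: "k \<ge> 0" using den eps by (simp add: k_def)
    have h1: "DG G v c * (8 * osc G + \<epsilon>) \<ge> \<epsilon>/2 * (8 * osc G + \<epsilon>)"
      using Dge oscnn eps by (intro mult_right_mono) auto
    have h2: "\<epsilon>/2 * (8 * osc G + \<epsilon>) \<ge> osc G * \<epsilon>"
    proof -
      have "0 \<le> osc G * \<epsilon>" using oscnn eps by simp
      moreover have "0 \<le> \<epsilon> * \<epsilon>" by simp
      ultimately show ?thesis by (simp add: algebra_simps)
    qed
    have "(DG G v c + osc G) * \<epsilon> \<le> DG G v c * (8 * osc G + 2 * \<epsilon>)"
      using h1 h2 by (simp add: algebra_simps)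
    then have kD: "(DG G v c + osc G) * k \<le> DG G v c"
      unfolding k_def using den by (simp add: pos_divide_le_eq mult.commute) 
    have "I * k \<le> (DG G v c + osc G) * PE * k" using Ib k0 by (rule mult_right_mono)
    also have "\<dots> = ((DG G v c + osc G) * k) * PE" by simp
    also have "\<dots> \<le> DG G v c * PE" using kD PEpos by (intro mult_right_mono) auto
    finally show ?thesis unfolding k_def .
  qed
  have "I / PRR * \<epsilon> / (8 * osc G + 2 * \<epsilon>) \<le> DG G v c * PE / PRR"
  proof -
    have "I / PRR * \<epsilon> / (8 * osc G + 2 * \<epsilon>) = (I * (\<epsilon> / (8 * osc G + 2 * \<epsilon>))) / PRR" by simp
    also have "\<dots> \<le> DG G v c * PE / PRR" using divide_right_mono[OF key, of PRR] PRpos by simp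
    finally show ?thesis .
  qed
  then show ?thesis using lhs_eq rhs_eq unfolding Hs_def c_def v_def by simp
qed

theorem lemmaC2:
  fixes M :: "'w measure" and SS :: "'s measure" and TT :: "'t measure"
    and \<sigma> :: "'w \<Rightarrow> 's" and \<tau> :: "'w \<Rightarrow> 't" and Y :: "'w \<Rightarrow> real"
    and G :: "real \<Rightarrow> real" and \<epsilon> :: real and St :: "'s set" and Tt :: "'t set"
  assumes "prob_space M"
    and "\<sigma> \<in> M \<rightarrow>\<^sub>M SS" and "\<tau> \<in> M \<rightarrow>\<^sub>M TT" and "Y \<in> borel_measurable M"
    and "\<forall>\<omega>\<in>space M. Y \<omega> \<in> {0..1}"
    and "strictly_convex_on {0..1} G" and "G differentiable_on {0<..<1}"
    and "bdd_above (G ` {0..1})" and "bdd_below (G ` {0..1})"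
    and "\<epsilon> > 0"
    and "St \<in> sets SS" and "Tt \<in> sets TT"
    and "measure M (rect M \<sigma> \<tau> St Tt) > 0"
  shows
    \<comment> \<open>Alice's turn: for every version f of mu_{sigma T_t}, messages High and Low\<close>
    "(\<forall>f. post_alice M \<sigma> SS \<tau> Tt Y f \<longrightarrow>
       (\<forall>m\<in>{High, Low}.
          condE M (\<lambda>\<omega>. DG G (condE M Y (rect M \<sigma> \<tau>
                      {s\<in>St. dmsg G \<epsilon> (f s) (condE M Y (rect M \<sigma> \<tau> St Tt))
                              = dmsg G \<epsilon> (f (\<sigma> \<omega>)) (condE M Y (rect M \<sigma> \<tau> St Tt))} Tt))
                      (condE M Y (rect M \<sigma> \<tau> St Tt))
                   * indicator {\<omega>'\<in>space M. dmsg G \<epsilon> (f (\<sigma> \<omega>')) (condE M Y (rect M \<sigma> \<tau> St Tt)) = m} \<omega>)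
             (rect M \<sigma> \<tau> St Tt)
          \<ge> condE M (\<lambda>\<omega>. DG G (f (\<sigma> \<omega>)) (condE M Y (rect M \<sigma> \<tau> St Tt))
                   * indicator {\<omega>'\<in>space M. dmsg G \<epsilon> (f (\<sigma> \<omega>')) (condE M Y (rect M \<sigma> \<tau> St Tt)) = m} \<omega>)
             (rect M \<sigma> \<tau> St Tt) * \<epsilon> / (8 * osc G + 2 * \<epsilon>)))
   \<and>
    \<comment> \<open>Bob's turn: for every version g of mu_{S_t tau}, messages High and Low\<close>
    (\<forall>g. post_bob M \<sigma> St \<tau> TT Y g \<longrightarrow>
       (\<forall>m\<in>{High, Low}.
          condE M (\<lambda>\<omega>. DG G (condE M Y (rect M \<sigma> \<tau> St
                      {t\<in>Tt. dmsg G \<epsilon> (g t) (condE M Y (rect M \<sigma> \<tau> St Tt))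
                              = dmsg G \<epsilon> (g (\<tau> \<omega>)) (condE M Y (rect M \<sigma> \<tau> St Tt))}))
                      (condE M Y (rect M \<sigma> \<tau> St Tt))
                   * indicator {\<omega>'\<in>space M. dmsg G \<epsilon> (g (\<tau> \<omega>')) (condE M Y (rect M \<sigma> \<tau> St Tt)) = m} \<omega>)
             (rect M \<sigma> \<tau> St Tt)
          \<ge> condE M (\<lambda>\<omega>. DG G (g (\<tau> \<omega>)) (condE M Y (rect M \<sigma> \<tau> St Tt))
                   * indicator {\<omega>'\<in>space M. dmsg G \<epsilon> (g (\<tau> \<omega>')) (condE M Y (rect M \<sigma> \<tau> St Tt)) = m} \<omega>)
             (rect M \<sigma> \<tau> St Tt) * \<epsilon> / (8 * osc G + 2 * \<epsilon>)))"
proof -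
  interpret prob_space M by (rule assms(1))
  have Rm: "rect M \<sigma> \<tau> A B \<in> sets M" if "A \<in> sets SS" "B \<in> sets TT" for A B
  proof -
    have "rect M \<sigma> \<tau> A B = (\<sigma> -` A \<inter> space M) \<inter> (\<tau> -` B \<inter> space M)" by (auto simp: rect_def)
    then show ?thesis using measurable_sets[OF assms(2) that(1)] measurable_sets[OF assms(3) that(2)] by auto
  qed
  have Rm2: "rect M \<sigma> \<tau> A B \<in> sets M" if "A \<in> sets SS" "B \<subseteq> Tt" "B \<in> sets TT" for A B
    using Rm that by blast
  define R where "R = rect M \<sigma> \<tau> St Tt"
  define c where "c = condE M Y R"
  have R: "R \<in> sets M" unfolding R_def using Rm assms(11,12) by blast
  have PR: "measure M R > 0" using assms(13) R_def by simp
  show ?thesis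
  proof (intro conjI allI impI ballI)
    fix f m assume pa: "post_alice M \<sigma> SS \<tau> Tt Y f" and mm: "m \<in> {High, Low}"
    have fm: "f \<in> borel_measurable SS" and fb: "\<forall>s. f s \<in> {0..1}"
      and fint: "\<And>A. A \<in> sets SS \<Longrightarrow> (\<integral>\<omega>. Y \<omega> * indicator (rect M \<sigma> \<tau> A Tt) \<omega> \<partial>M)
                 = (\<integral>\<omega>. f (\<sigma> \<omega>) * indicator (rect M \<sigma> \<tau> A Tt) \<omega> \<partial>M)"
      using pa unfolding post_alice_def by auto
    define A where "A = {s\<in>St. dmsg G \<epsilon> (f s) c = m}"
    have Asp: "St \<subseteq> space SS" using assms(11) sets.sets_into_space by blast
    have "A = St \<inter> {s\<in>space SS. dmsg G \<epsilon> (f s) c = m}" unfolding A_def using Asp by auto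
    then have A: "A \<in> sets SS" using dmsg_sets[OF assms(7) fm, of \<epsilon> c m] fb assms(11) by auto
    have Fm: "(\<lambda>\<omega>. f (\<sigma> \<omega>)) \<in> borel_measurable M" using measurable_compose[OF assms(2) fm] by simp
    define Hs where "Hs = {\<omega>'\<in>space M. dmsg G \<epsilon> (f (\<sigma> \<omega>')) c = m}"
    have core': "condE M (\<lambda>\<omega>. DG G (condE M Y (rect M \<sigma> \<tau> A Tt)) c * indicator Hs \<omega>) R
       \<ge> condE M (\<lambda>\<omega>. DG G (f (\<sigma> \<omega>)) c * indicator Hs \<omega>) R * \<epsilon> / (8 * osc G + 2 * \<epsilon>)"
      unfolding c_def Hs_def
    proof (rule core[OF assms(1,4,5,6,7,8,9,10) R PR Fm _ _ _ _ mm])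
      show "\<forall>\<omega>\<in>space M. f (\<sigma> \<omega>) \<in> {0..1}" using fb by auto
      show "(\<integral>\<omega>. Y \<omega> * indicator R \<omega> \<partial>M) = (\<integral>\<omega>. f (\<sigma> \<omega>) * indicator R \<omega> \<partial>M)"
        unfolding R_def by (rule fint[OF assms(11)])
      show "rect M \<sigma> \<tau> A Tt = {\<omega> \<in> R. dmsg G \<epsilon> (f (\<sigma> \<omega>)) (condE M Y R) = m}"
        unfolding R_def A_def c_def rect_def by auto
      show "(\<integral>\<omega>. Y \<omega> * indicator (rect M \<sigma> \<tau> A Tt) \<omega> \<partial>M) = (\<integral>\<omega>. f (\<sigma> \<omega>) * indicator (rect M \<sigma> \<tau> A Tt) \<omega> \<partial>M)"
        by (rule fint[OF A])
    qed
    have eq: "condE M (\<lambda>\<omega>. DG G (condE M Y (rect M \<sigma> \<tau> {s\<in>St. dmsg G \<epsilon> (f s) c = dmsg G \<epsilon> (f (\<sigma> \<omega>)) c} Tt)) c * indicator Hs \<omega>) R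
      = condE M (\<lambda>\<omega>. DG G (condE M Y (rect M \<sigma> \<tau> A Tt)) c * indicator Hs \<omega>) R"
      unfolding condE_def
      by (intro arg_cong2[where f="(/)"] Bochner_Integration.integral_cong refl)
         (auto simp: indicator_def Hs_def A_def)
    show "condE M (\<lambda>\<omega>. DG G (condE M Y (rect M \<sigma> \<tau>
                      {s\<in>St. dmsg G \<epsilon> (f s) (condE M Y (rect M \<sigma> \<tau> St Tt))
                              = dmsg G \<epsilon> (f (\<sigma> \<omega>)) (condE M Y (rect M \<sigma> \<tau> St Tt))} Tt))
                      (condE M Y (rect M \<sigma> \<tau> St Tt))
                   * indicator {\<omega>'\<in>space M. dmsg G \<epsilon> (f (\<sigma> \<omega>')) (condE M Y (rect M \<sigma> \<tau> St Tt)) = m} \<omega>)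
             (rect M \<sigma> \<tau> St Tt)
          \<ge> condE M (\<lambda>\<omega>. DG G (f (\<sigma> \<omega>)) (condE M Y (rect M \<sigma> \<tau> St Tt))
                   * indicator {\<omega>'\<in>space M. dmsg G \<epsilon> (f (\<sigma> \<omega>')) (condE M Y (rect M \<sigma> \<tau> St Tt)) = m} \<omega>)
             (rect M \<sigma> \<tau> St Tt) * \<epsilon> / (8 * osc G + 2 * \<epsilon>)"
      using core' eq unfolding Hs_def c_def R_def by simp
  next
    fix g m assume pb: "post_bob M \<sigma> St \<tau> TT Y g" and mm: "m \<in> {High, Low}"
    have gm: "g \<in> borel_measurable TT" and gb: "\<forall>s. g s \<in> {0..1}"
      and gint: "\<And>B. B \<in> sets TT \<Longrightarrow> (\<integral>\<omega>. Y \<omega> * indicator (rect M \<sigma> \<tau> St B) \<omega> \<partial>M)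
                 = (\<integral>\<omega>. g (\<tau> \<omega>) * indicator (rect M \<sigma> \<tau> St B) \<omega> \<partial>M)"
      using pb unfolding post_bob_def by auto
    define B where "B = {t\<in>Tt. dmsg G \<epsilon> (g t) c = m}"
    have Bsp: "Tt \<subseteq> space TT" using assms(12) sets.sets_into_space by blast
    have "B = Tt \<inter> {s\<in>space TT. dmsg G \<epsilon> (g s) c = m}" unfolding B_def using Bsp by auto
    then have B: "B \<in> sets TT" using dmsg_sets[OF assms(7) gm, of \<epsilon> c m] gb assms(12) by auto
    have Fm: "(\<lambda>\<omega>. g (\<tau> \<omega>)) \<in> borel_measurable M" using measurable_compose[OF assms(3) gm] by simp
    define Hs where "Hs = {\<omega>'\<in>space M. dmsg G \<epsilon> (g (\<tau> \<omega>')) c = m}"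
    have core': "condE M (\<lambda>\<omega>. DG G (condE M Y (rect M \<sigma> \<tau> St B)) c * indicator Hs \<omega>) R
       \<ge> condE M (\<lambda>\<omega>. DG G (g (\<tau> \<omega>)) c * indicator Hs \<omega>) R * \<epsilon> / (8 * osc G + 2 * \<epsilon>)"
      unfolding c_def Hs_def
    proof (rule core[OF assms(1,4,5,6,7,8,9,10) R PR Fm _ _ _ _ mm])
      show "\<forall>\<omega>\<in>space M. g (\<tau> \<omega>) \<in> {0..1}" using gb by auto
      show "(\<integral>\<omega>. Y \<omega> * indicator R \<omega> \<partial>M) = (\<integral>\<omega>. g (\<tau> \<omega>) * indicator R \<omega> \<partial>M)"
        unfolding R_def by (rule gint[OF assms(12)])
      show "rect M \<sigma> \<tau> St B = {\<omega> \<in> R. dmsg G \<epsilon> (g (\<tau> \<omega>)) (condE M Y R) = m}"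
        unfolding R_def B_def c_def rect_def by auto
      show "(\<integral>\<omega>. Y \<omega> * indicator (rect M \<sigma> \<tau> St B) \<omega> \<partial>M) = (\<integral>\<omega>. g (\<tau> \<omega>) * indicator (rect M \<sigma> \<tau> St B) \<omega> \<partial>M)"
        by (rule gint[OF B])
    qed
    have eq: "condE M (\<lambda>\<omega>. DG G (condE M Y (rect M \<sigma> \<tau> St {t\<in>Tt. dmsg G \<epsilon> (g t) c = dmsg G \<epsilon> (g (\<tau> \<omega>)) c})) c * indicator Hs \<omega>) R
      = condE M (\<lambda>\<omega>. DG G (condE M Y (rect M \<sigma> \<tau> St B)) c * indicator Hs \<omega>) R"
      unfolding condE_def
      by (intro arg_cong2[where f="(/)"] Bochner_Integration.integral_cong refl)
         (auto simp: indicator_def Hs_def B_def)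
    show "condE M (\<lambda>\<omega>. DG G (condE M Y (rect M \<sigma> \<tau> St
                      {t\<in>Tt. dmsg G \<epsilon> (g t) (condE M Y (rect M \<sigma> \<tau> St Tt))
                              = dmsg G \<epsilon> (g (\<tau> \<omega>)) (condE M Y (rect M \<sigma> \<tau> St Tt))}))
                      (condE M Y (rect M \<sigma> \<tau> St Tt))
                   * indicator {\<omega>'\<in>space M. dmsg G \<epsilon> (g (\<tau> \<omega>')) (condE M Y (rect M \<sigma> \<tau> St Tt)) = m} \<omega>)
             (rect M \<sigma> \<tau> St Tt)
          \<ge> condE M (\<lambda>\<omega>. DG G (g (\<tau> \<omega>)) (condE M Y (rect M \<sigma> \<tau> St Tt))
                   * indicator {\<omega>'\<in>space M. dmsg G \<epsilon> (g (\<tau> \<omega>')) (condE M Y (rect M \<sigma> \<tau> St Tt)) = m} \<omega>)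
             (rect M \<sigma> \<tau> St Tt) * \<epsilon> / (8 * osc G + 2 * \<epsilon>)"
      using core' eq unfolding Hs_def c_def R_def by simp
  qed
qed

end
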